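(* Let $P_0,P_1,P_2\in\mathbb H$ be distinct, let $\varepsilon\in\{-1,1\}$, and for $i\in\mathbb Z/3\mathbb Z$ let $$R_i:=\frac{\sqrt{1-2\langle P_{i+1},P_{i+2}\rangle}(P_{i+1}+P_{i+2})+\varepsilon P_{i+1}\tilde\times P_{i+2}}{\sqrt3(1-\langle P_{i+1},P_{i+2}\rangle)}.$$ Let $\alpha:=-1+\langle P_0,P_1\rangle+\langle P_1,P_2\rangle+\langle P_2,P_0\rangle$, $\chi:=\langle P_0\tilde\times P_1,P_2\rangle$, $d_i:=\sqrt{1-2\langle P_{i+1},P_{i+2}\rangle}$ and $\gamma:=3(d_0^2+1)(d_1^2+1)(d_2^2+1)$. Then for every $i\in\mathbb Z/3\mathbb Z$, $$\gamma\langle R_{i+1},R_{i+2}\rangle=(d_i^2+1)\Bigl(4\bigl(\alpha d_{i+1}d_{i+2}+\varepsilon\chi(d_{i+1}+d_{i+2})\bigr)-(d_{i+1}^2-1)(d_{i+2}^2-1)+2(d_i^2-1)\Bigr)$$ and $$\gamma\bigl(\langle R_{i+2},R_i\rangle-\langle R_i,R_{i+1}\rangle\bigr)=4(d_{i+2}-d_{i+1})\Bigl(\alpha(d_0+d_1+d_2-d_0d_1d_2)+\varepsilon\chi(1-d_0d_1-d_1d_2-d_2d_0)\Bigr).$$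
   Context: $\langle v,w\rangle=-v_1w_1+v_2w_2+v_3w_3$ on $\mathbb R^3$; $\mathbb H=\{P\in\mathbb R^3:\langle P,P\rangle=-1,\ P_1\ge1\}$; $v\tilde\times w:=J(v\times w)$ with $J=\mathrm{diag}(-1,1,1)$ and $\times$ the Euclidean cross product. $R_i$ is the centroid of the equilateral triangle erected (on the side determined by $\varepsilon$) on the side $P_{i+1}P_{i+2}$, i.e. the vertices of the Napoleonization of $P_0P_1P_2$. *)

theory Defs
  imports "HOL-Analysis.Analysis" "HOL-Analysis.Cross3"
begin

definition mink :: "real^3 \<Rightarrow> real^3 \<Rightarrow> real" where
  "mink v w = - (v$1 * w$1) + v$2 * w$2 + v$3 * w$3"

text \<open>Hyperboloid model of the hyperbolic plane.\<close>
definition hyp :: "(real^3) set" where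
  "hyp = {P. mink P P = -1 \<and> P$1 \<ge> 1}"

definition lcross :: "real^3 \<Rightarrow> real^3 \<Rightarrow> real^3" where
  "lcross v w = (\<chi> k. (if k = 1 then -1 else 1) * (cross3 v w) $ k)"

text \<open>Indices in Z/3Z are represented by naturals taken mod 3.\<close>
definition napR :: "real \<Rightarrow> (nat \<Rightarrow> real^3) \<Rightarrow> nat \<Rightarrow> real^3" where
  "napR eps P i =
     (let A = P ((i + 1) mod 3); B = P ((i + 2) mod 3) in
       (1 / (sqrt 3 * (1 - mink A B))) *\<^sub>R
         (sqrt (1 - 2 * mink A B) *\<^sub>R (A + B) + eps *\<^sub>R lcross A B))"

definition napd :: "(nat \<Rightarrow> real^3) \<Rightarrow> nat \<Rightarrow> real" where
  "napd P i = sqrt (1 - 2 * mink (P ((i + 1) mod 3)) (P ((i + 2) mod 3)))"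

end

theory Submission
  imports Defs
begin

lemma cross_comp: "lcross u v = vector [-(u$2 * v$3 - u$3 * v$2), u$3 * v$1 - u$1 * v$3, u$1 * v$2 - u$2 * v$1]"
  unfolding lcross_def cross3_def
  by (simp add: vec_eq_iff forall_3 vector_3)

lemma mink_le:
  assumes "P \<in> hyp" "Q \<in> hyp" shows "mink P Q \<le> -1"
proof -
  let ?x = "P$1" and ?y = "P$2" and ?z = "P$3" and ?a = "Q$1" and ?b = "Q$2" and ?c = "Q$3"
  have h1: "?x^2 = 1 + ?y^2 + ?z^2" "?x \<ge> 1" using assms(1) unfolding hyp_def mink_def by (auto simp: power2_eq_square)
  have h2: "?a^2 = 1 + ?b^2 + ?c^2" "?a \<ge> 1" using assms(2) unfolding hyp_def mink_def by (auto simp: power2_eq_square)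
  have sq: "(?x*?a)^2 \<ge> (1 + ?y*?b + ?z*?c)^2"
  proof -
    have "(?x*?a)^2 = (1 + ?y^2 + ?z^2)*(1 + ?b^2 + ?c^2)" using h1 h2 by (simp add: power_mult_distrib)
    moreover have "(1 + ?y^2 + ?z^2)*(1 + ?b^2 + ?c^2) - (1 + ?y*?b + ?z*?c)^2 = (?y-?b)^2 + (?z-?c)^2 + (?y*?c - ?z*?b)^2"
      by (simp add: power2_eq_square algebra_simps)
    ultimately show ?thesis by (smt (verit) zero_le_power2)
  qed
  have "?x*?a \<ge> 0" using h1 h2 by simp
  hence "\<bar>1 + ?y*?b + ?z*?c\<bar> \<le> ?x*?a" using sq by (metis abs_le_square_iff abs_of_nonneg)
  thus ?thesis unfolding mink_def by linarith
qed

lemma core: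
  assumes "mink A A = -1"
  shows "mink (dd1 *\<^sub>R (C + A) + eps *\<^sub>R lcross C A) (dd2 *\<^sub>R (A + B) + eps *\<^sub>R lcross A B)
    = dd1*dd2*(mink A B + mink B C + mink C A - 1) + eps*(dd1+dd2)*mink (lcross A B) C
      - eps^2 * (mink C A * mink A B + mink B C)"
  using assms unfolding mink_def cross_comp
  by (simp add: vector_3 power2_eq_square) algebra


lemma mink_scale: "mink (a *\<^sub>R X) (b *\<^sub>R Y) = a*b*mink X Y"
  unfolding mink_def by (simp add: algebra_simps)

lemma mink_sym: "mink X Y = mink Y X"
  unfolding mink_def by (simp add: algebra_simps)

lemma chi_cyc: "mink (lcross A B) C = mink (lcross B C) A"
  unfolding mink_def cross_comp by (simp add: vector_3 algebra_simps)

lemma alg: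
  fixes d0 d1 d2 al e c :: real
  assumes "al = -1 + ((1-d0^2)+(1-d1^2)+(1-d2^2))/2"
  shows "(d1^2+1)*(4*(al*d2*d0+e*c*(d2+d0))-(d2^2-1)*(d0^2-1)+2*(d1^2-1))-(d2^2+1)*(4*(al*d0*d1+e*c*(d0+d1))-(d0^2-1)*(d1^2-1)+2*(d2^2-1))
    = 4*(d2-d1)*(al*(d0+d1+d2-d0*d1*d2)+e*c*(1-d0*d1-d1*d2-d2*d0))"
  unfolding assms by (simp add: field_simps) algebra

definition ff :: "real \<Rightarrow> real^3 \<Rightarrow> real^3 \<Rightarrow> real^3" where
  "ff eps X Y = (1 / (sqrt 3 * (1 - mink X Y))) *\<^sub>R (sqrt (1 - 2 * mink X Y) *\<^sub>R (X + Y) + eps *\<^sub>R lcross X Y)"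

definition ddd :: "real^3 \<Rightarrow> real^3 \<Rightarrow> real" where
  "ddd X Y = sqrt (1 - 2 * mink X Y)"

lemma gen:
  assumes hA: "A \<in> hyp" and hB: "B \<in> hyp" and hC: "C \<in> hyp" and e2: "eps^2 = 1"
  shows "3 * ((ddd B C)^2 + 1) * ((ddd C A)^2 + 1) * ((ddd A B)^2 + 1)
     * mink (ff eps C A) (ff eps A B)
   = ((ddd B C)^2 + 1) * (4 * ((-1 + mink A B + mink B C + mink C A) * ddd C A * ddd A B
        + eps * mink (lcross A B) C * (ddd C A + ddd A B))
      - ((ddd C A)^2 - 1) * ((ddd A B)^2 - 1) + 2 * ((ddd B C)^2 - 1))"
proof -
  have AA: "mink A A = -1" using hA unfolding hyp_def by auto
  have ab: "mink A B \<le> -1" "mink B C \<le> -1" "mink C A \<le> -1" using mink_le hA hB hC by auto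
  define a where "a = mink A B"
  define b where "b = mink B C"
  define c where "c = mink C A"
  define x where "x = sqrt (1 - 2 * a)"
  define y where "y = sqrt (1 - 2 * c)"
  define ch where "ch = mink (lcross A B) C"
  have x2: "x^2 = 1 - 2*a" unfolding x_def using ab a_def by simp
  have y2: "y^2 = 1 - 2*c" unfolding y_def using ab c_def by simp
  have z2: "(sqrt (1 - 2 * b))^2 = 1 - 2*b" using ab b_def by simp
  have s3: "(sqrt 3)^2 = (3::real)" by simp
  have s3p: "sqrt 3 > (0::real)" by simp
  have "mink ((1 / (sqrt 3 * (1 - c))) *\<^sub>R (y *\<^sub>R (C + A) + eps *\<^sub>R lcross C A))
            ((1 / (sqrt 3 * (1 - a))) *\<^sub>R (x *\<^sub>R (A + B) + eps *\<^sub>R lcross A B))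
     = (1 / (sqrt 3 * (1 - c))) * (1 / (sqrt 3 * (1 - a))) *
       (y*x*(a + b + c - 1) + eps*(y+x)*ch - eps^2 * (c * a + b))"
    unfolding mink_scale core[OF AA] a_def b_def c_def ch_def by simp
  also have "\<dots> = (y*x*(a + b + c - 1) + eps*(y+x)*ch - (c * a + b)) / (3 * (1-c) * (1-a))"
    using e2 s3 by (simp add: field_simps)
  finally have M: "mink ((1 / (sqrt 3 * (1 - c))) *\<^sub>R (y *\<^sub>R (C + A) + eps *\<^sub>R lcross C A))
            ((1 / (sqrt 3 * (1 - a))) *\<^sub>R (x *\<^sub>R (A + B) + eps *\<^sub>R lcross A B))
      = (y*x*(a + b + c - 1) + eps*(y+x)*ch - (c * a + b)) / (3 * (1-c) * (1-a))" .
  have nz: "1 - c \<noteq> 0" "1 - a \<noteq> 0" using ab a_def c_def by auto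
  show ?thesis
    unfolding ff_def ddd_def
    unfolding a_def[symmetric] b_def[symmetric] c_def[symmetric] x_def[symmetric] y_def[symmetric] ch_def[symmetric] M
    unfolding x2 y2 z2
  proof -
    let ?N = "y*x*(a + b + c - 1) + eps*(y+x)*ch - (c * a + b)"
    have "3 * (1 - 2*b + 1) * (1 - 2*c + 1) * (1 - 2*a + 1) * (?N / (3 * (1-c) * (1-a))) = 4*(1 - 2*b + 1)*?N"
    proof -
      have k: "3 * (1 - 2*b + 1) * (1 - 2*c + 1) * (1 - 2*a + 1) = (4*(1 - 2*b + 1)) * (3 * (1-c) * (1-a))"
        by (simp add: algebra_simps)
      have nz3: "3 * (1-c) * (1-a) \<noteq> 0" using nz by simp
      show ?thesis unfolding k using nz3 by simp
    qed
    also have "\<dots> = (1 - 2*b + 1) * (4 * ((-1 + a + b + c) * y * x + eps * ch * (y + x))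
      - (1 - 2*c - 1) * (1 - 2*a - 1) + 2 * (1 - 2*b - 1))" by (simp add: algebra_simps)
    finally show "3 * (1 - 2*b + 1) * (1 - 2*c + 1) * (1 - 2*a + 1) * (?N / (3 * (1-c) * (1-a))) = (1 - 2*b + 1) * (4 * ((-1 + a + b + c) * y * x + eps * ch * (y + x))
      - (1 - 2*c - 1) * (1 - 2*a - 1) + 2 * (1 - 2*b - 1))" .
  qed
qed


lemma fin:
  fixes d0 d1 d2 al e c m01 m12 m20 :: real
  assumes hal: "al = -1 + ((1-d0^2)+(1-d1^2)+(1-d2^2))/2"
  and h0: "3*((d0)^2+1)*((d1)^2+1)*((d2)^2+1)*m12 = ((d0)^2+1)*(4*(al*d1*d2 + e*c*(d1+d2)) - ((d1)^2-1)*((d2)^2-1) + 2*((d0)^2-1))"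
  and h1: "3*((d1)^2+1)*((d2)^2+1)*((d0)^2+1)*m20 = ((d1)^2+1)*(4*(al*d2*d0 + e*c*(d2+d0)) - ((d2)^2-1)*((d0)^2-1) + 2*((d1)^2-1))"
  and h2: "3*((d2)^2+1)*((d0)^2+1)*((d1)^2+1)*m01 = ((d2)^2+1)*(4*(al*d0*d1 + e*c*(d0+d1)) - ((d0)^2-1)*((d1)^2-1) + 2*((d2)^2-1))"
  shows "3*((d0)^2+1)*((d1)^2+1)*((d2)^2+1)*m12 = ((d0)^2+1)*(4*(al*d1*d2 + e*c*(d1+d2)) - ((d1)^2-1)*((d2)^2-1) + 2*((d0)^2-1))"
    "3*((d0)^2+1)*((d1)^2+1)*((d2)^2+1)*m20 = ((d1)^2+1)*(4*(al*d2*d0 + e*c*(d2+d0)) - ((d2)^2-1)*((d0)^2-1) + 2*((d1)^2-1))"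
    "3*((d0)^2+1)*((d1)^2+1)*((d2)^2+1)*m01 = ((d2)^2+1)*(4*(al*d0*d1 + e*c*(d0+d1)) - ((d0)^2-1)*((d1)^2-1) + 2*((d2)^2-1))"
    "3*((d0)^2+1)*((d1)^2+1)*((d2)^2+1)*(m20 - m01) = 4*(d2-d1)*(al*(d0+d1+d2-d0*d1*d2)+e*c*(1-d0*d1-d1*d2-d2*d0))"
    "3*((d0)^2+1)*((d1)^2+1)*((d2)^2+1)*(m01 - m12) = 4*(d0-d2)*(al*(d0+d1+d2-d0*d1*d2)+e*c*(1-d0*d1-d1*d2-d2*d0))"
    "3*((d0)^2+1)*((d1)^2+1)*((d2)^2+1)*(m12 - m20) = 4*(d1-d0)*(al*(d0+d1+d2-d0*d1*d2)+e*c*(1-d0*d1-d1*d2-d2*d0))"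
proof -
  have H1: "3*((d0)^2+1)*((d1)^2+1)*((d2)^2+1)*m20 = 3*((d1)^2+1)*((d2)^2+1)*((d0)^2+1)*m20" by algebra
  have H2: "3*((d0)^2+1)*((d1)^2+1)*((d2)^2+1)*m01 = 3*((d2)^2+1)*((d0)^2+1)*((d1)^2+1)*m01" by algebra
  show 1: "3*((d0)^2+1)*((d1)^2+1)*((d2)^2+1)*m12 = ((d0)^2+1)*(4*(al*d1*d2 + e*c*(d1+d2)) - ((d1)^2-1)*((d2)^2-1) + 2*((d0)^2-1))" by (fact h0)
  show 2: "3*((d0)^2+1)*((d1)^2+1)*((d2)^2+1)*m20 = ((d1)^2+1)*(4*(al*d2*d0 + e*c*(d2+d0)) - ((d2)^2-1)*((d0)^2-1) + 2*((d1)^2-1))" unfolding H1 by (rule h1)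
  show 3: "3*((d0)^2+1)*((d1)^2+1)*((d2)^2+1)*m01 = ((d2)^2+1)*(4*(al*d0*d1 + e*c*(d0+d1)) - ((d0)^2-1)*((d1)^2-1) + 2*((d2)^2-1))" unfolding H2 by (rule h2)
  show "3*((d0)^2+1)*((d1)^2+1)*((d2)^2+1)*(m20 - m01) = 4*(d2-d1)*(al*(d0+d1+d2-d0*d1*d2)+e*c*(1-d0*d1-d1*d2-d2*d0))"
  proof -
    have s1: "3*((d0)^2+1)*((d1)^2+1)*((d2)^2+1)*(m20 - m01) = 3*((d0)^2+1)*((d1)^2+1)*((d2)^2+1)*m20 - 3*((d0)^2+1)*((d1)^2+1)*((d2)^2+1)*m01" by (rule right_diff_distrib)
    have s2: "3*((d0)^2+1)*((d1)^2+1)*((d2)^2+1)*m20 - 3*((d0)^2+1)*((d1)^2+1)*((d2)^2+1)*m01 = (d1^2+1)*(4*(al*d2*d0 + e*c*(d2+d0)) - (d2^2-1)*(d0^2-1) + 2*(d1^2-1)) - (d2^2+1)*(4*(al*d0*d1 + e*c*(d0+d1)) - (d0^2-1)*(d1^2-1) + 2*(d2^2-1))" unfolding 2 3 by (rule refl)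
    have s3: "(d1^2+1)*(4*(al*d2*d0 + e*c*(d2+d0)) - (d2^2-1)*(d0^2-1) + 2*(d1^2-1)) - (d2^2+1)*(4*(al*d0*d1 + e*c*(d0+d1)) - (d0^2-1)*(d1^2-1) + 2*(d2^2-1)) = 4*(d2-d1)*(al*(d0+d1+d2-d0*d1*d2)+e*c*(1-d0*d1-d1*d2-d2*d0))"
      by (rule alg) (simp add: hal)
    have s4: "4*(d2-d1)*(al*(d0+d1+d2-d0*d1*d2)+e*c*(1-d0*d1-d1*d2-d2*d0)) = 4*(d2-d1)*(al*(d0+d1+d2-d0*d1*d2)+e*c*(1-d0*d1-d1*d2-d2*d0))" by (simp add: algebra_simps)
    show ?thesis by (rule trans[OF s1 trans[OF s2 trans[OF s3 s4]]])
  qed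
  show "3*((d0)^2+1)*((d1)^2+1)*((d2)^2+1)*(m01 - m12) = 4*(d0-d2)*(al*(d0+d1+d2-d0*d1*d2)+e*c*(1-d0*d1-d1*d2-d2*d0))"
  proof -
    have s1: "3*((d0)^2+1)*((d1)^2+1)*((d2)^2+1)*(m01 - m12) = 3*((d0)^2+1)*((d1)^2+1)*((d2)^2+1)*m01 - 3*((d0)^2+1)*((d1)^2+1)*((d2)^2+1)*m12" by (rule right_diff_distrib)
    have s2: "3*((d0)^2+1)*((d1)^2+1)*((d2)^2+1)*m01 - 3*((d0)^2+1)*((d1)^2+1)*((d2)^2+1)*m12 = (d2^2+1)*(4*(al*d0*d1 + e*c*(d0+d1)) - (d0^2-1)*(d1^2-1) + 2*(d2^2-1)) - (d0^2+1)*(4*(al*d1*d2 + e*c*(d1+d2)) - (d1^2-1)*(d2^2-1) + 2*(d0^2-1))" unfolding 3 1 by (rule refl)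
    have s3: "(d2^2+1)*(4*(al*d0*d1 + e*c*(d0+d1)) - (d0^2-1)*(d1^2-1) + 2*(d2^2-1)) - (d0^2+1)*(4*(al*d1*d2 + e*c*(d1+d2)) - (d1^2-1)*(d2^2-1) + 2*(d0^2-1)) = 4*(d0-d2)*(al*(d1+d2+d0-d1*d2*d0)+e*c*(1-d1*d2-d2*d0-d0*d1))"
      by (rule alg) (simp add: hal)
    have s4: "4*(d0-d2)*(al*(d1+d2+d0-d1*d2*d0)+e*c*(1-d1*d2-d2*d0-d0*d1)) = 4*(d0-d2)*(al*(d0+d1+d2-d0*d1*d2)+e*c*(1-d0*d1-d1*d2-d2*d0))" by (simp add: algebra_simps)
    show ?thesis by (rule trans[OF s1 trans[OF s2 trans[OF s3 s4]]])
  qed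
  show "3*((d0)^2+1)*((d1)^2+1)*((d2)^2+1)*(m12 - m20) = 4*(d1-d0)*(al*(d0+d1+d2-d0*d1*d2)+e*c*(1-d0*d1-d1*d2-d2*d0))"
  proof -
    have s1: "3*((d0)^2+1)*((d1)^2+1)*((d2)^2+1)*(m12 - m20) = 3*((d0)^2+1)*((d1)^2+1)*((d2)^2+1)*m12 - 3*((d0)^2+1)*((d1)^2+1)*((d2)^2+1)*m20" by (rule right_diff_distrib)
    have s2: "3*((d0)^2+1)*((d1)^2+1)*((d2)^2+1)*m12 - 3*((d0)^2+1)*((d1)^2+1)*((d2)^2+1)*m20 = (d0^2+1)*(4*(al*d1*d2 + e*c*(d1+d2)) - (d1^2-1)*(d2^2-1) + 2*(d0^2-1)) - (d1^2+1)*(4*(al*d2*d0 + e*c*(d2+d0)) - (d2^2-1)*(d0^2-1) + 2*(d1^2-1))" unfolding 1 2 by (rule refl)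
    have s3: "(d0^2+1)*(4*(al*d1*d2 + e*c*(d1+d2)) - (d1^2-1)*(d2^2-1) + 2*(d0^2-1)) - (d1^2+1)*(4*(al*d2*d0 + e*c*(d2+d0)) - (d2^2-1)*(d0^2-1) + 2*(d1^2-1)) = 4*(d1-d0)*(al*(d2+d0+d1-d2*d0*d1)+e*c*(1-d2*d0-d0*d1-d1*d2))"
      by (rule alg) (simp add: hal)
    have s4: "4*(d1-d0)*(al*(d2+d0+d1-d2*d0*d1)+e*c*(1-d2*d0-d0*d1-d1*d2)) = 4*(d1-d0)*(al*(d0+d1+d2-d0*d1*d2)+e*c*(1-d0*d1-d1*d2-d2*d0))" by (simp add: algebra_simps)
    show ?thesis by (rule trans[OF s1 trans[OF s2 trans[OF s3 s4]]])
  qed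
qed


theorem lemma4p1:
  fixes P :: "nat \<Rightarrow> real^3" and eps :: real and i :: nat
  assumes hP: "\<And>j. j < 3 \<Longrightarrow> P j \<in> hyp"
    and dist: "P 0 \<noteq> P 1" "P 1 \<noteq> P 2" "P 2 \<noteq> P 0"
    and eps: "eps \<in> {-1, 1}"
    and i: "i < 3"
  shows
    "let alpha = -1 + mink (P 0) (P 1) + mink (P 1) (P 2) + mink (P 2) (P 0);
         chi = mink (lcross (P 0) (P 1)) (P 2);
         d = napd P; R = napR eps P;
         gam = 3 * ((d 0)^2 + 1) * ((d 1)^2 + 1) * ((d 2)^2 + 1);
         i1 = (i + 1) mod 3; i2 = (i + 2) mod 3
     in gam * mink (R i1) (R i2) =
          ((d i)^2 + 1) * (4 * (alpha * d i1 * d i2 + eps * chi * (d i1 + d i2))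
            - ((d i1)^2 - 1) * ((d i2)^2 - 1) + 2 * ((d i)^2 - 1))
      \<and> gam * (mink (R i2) (R i) - mink (R i) (R i1)) =
          4 * (d i2 - d i1) * (alpha * (d 0 + d 1 + d 2 - d 0 * d 1 * d 2)
            + eps * chi * (1 - d 0 * d 1 - d 1 * d 2 - d 2 * d 0))"
proof -
  have e2: "eps^2 = 1" using eps by auto
  have P0: "P 0 \<in> hyp" and P1: "P 1 \<in> hyp" and P2: "P 2 \<in> hyp" using hP by auto
  define al where "al = -1 + mink (P 0) (P 1) + mink (P 1) (P 2) + mink (P 2) (P 0)"
  define ch where "ch = mink (lcross (P 0) (P 1)) (P 2)"
  have D: "ddd (P 1) (P 2) = napd P 0" "ddd (P 2) (P 0) = napd P 1" "ddd (P 0) (P 1) = napd P 2"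
    by (simp_all add: ddd_def napd_def numeral_2_eq_2)
  have R: "ff eps (P 1) (P 2) = napR eps P 0" "ff eps (P 2) (P 0) = napR eps P 1" "ff eps (P 0) (P 1) = napR eps P 2"
    by (simp_all add: ff_def napR_def numeral_2_eq_2 Let_def)
  have a0: "-1 + mink (P 0) (P 1) + mink (P 1) (P 2) + mink (P 2) (P 0) = al" by (simp add: al_def)
  have a1: "-1 + mink (P 1) (P 2) + mink (P 2) (P 0) + mink (P 0) (P 1) = al" by (simp add: al_def)
  have a2: "-1 + mink (P 2) (P 0) + mink (P 0) (P 1) + mink (P 1) (P 2) = al" by (simp add: al_def)
  have c0: "mink (lcross (P 0) (P 1)) (P 2) = ch" by (simp add: ch_def)
  have c1: "mink (lcross (P 1) (P 2)) (P 0) = ch" unfolding ch_def by (rule chi_cyc[symmetric])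
  have c2: "mink (lcross (P 2) (P 0)) (P 1) = ch" unfolding ch_def by (rule chi_cyc)
  note h0 = gen[OF P0 P1 P2 e2, unfolded D R a0 c0]
  note h1 = gen[OF P1 P2 P0 e2, unfolded D R a1 c1]
  note h2 = gen[OF P2 P0 P1 e2, unfolded D R a2 c2]
  have ml: "mink (P 0) (P 1) \<le> -1" "mink (P 1) (P 2) \<le> -1" "mink (P 2) (P 0) \<le> -1"
    using mink_le P0 P1 P2 by auto
  have sq: "(napd P 0)^2 = 1 - 2 * mink (P 1) (P 2)" "(napd P 1)^2 = 1 - 2 * mink (P 2) (P 0)"
    "(napd P 2)^2 = 1 - 2 * mink (P 0) (P 1)"
    unfolding D[symmetric] ddd_def using ml by simp_all
  have hal: "al = -1 + ((1 - (napd P 0)^2) + (1 - (napd P 1)^2) + (1 - (napd P 2)^2)) / 2"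
    unfolding sq al_def by simp
  note F = fin[OF hal h0 h1 h2]
  have m: "(0+1) mod 3 = (1::nat)" "(0+2) mod 3 = (2::nat)" "(1+1) mod 3 = (2::nat)"
    "(1+2) mod 3 = (0::nat)" "(2+1) mod 3 = (0::nat)" "(2+2) mod 3 = (1::nat)" by simp_all
  have "i = 0 \<or> i = 1 \<or> i = 2" using i by auto
  moreover have ?thesis if "i = 0"
    unfolding Let_def that m al_def[symmetric] ch_def[symmetric] using F(1) F(4) by (rule conjI)
  moreover have ?thesis if "i = 1"
    unfolding Let_def that m al_def[symmetric] ch_def[symmetric] using F(2) F(5) by (rule conjI)
  moreover have ?thesis if "i = 2"
    unfolding Let_def that m al_def[symmetric] ch_def[symmetric] using F(3) F(6) by (rule conjI)
  ultimately show ?thesis by blast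
qed

end
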